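(* Let $\varphi$ be an endomorphism of an abelian group $A$. Suppose that either there is a $\varphi$-invariant subgroup $A_0$ of finite index in $A$ such that the restriction of $\varphi$ to $A_0$ is inertial (resp. left-inertial), or there is a finite $\varphi$-invariant subgroup $F$ of $A$ such that the endomorphism of $A/F$ induced by $\varphi$ is inertial (resp. left-inertial). Then $\varphi$ is inertial (resp. left-inertial) on $A$.
   Context: Abelian groups are written additively. An endomorphism $\varphi$ of $A$ is inertial if $(\varphi(X)+X)/X$ is finite for every subgroup $X\le A$, and left-inertial if $X/(X\cap\varphi(X))$ is finite for every $X\le A$. *)

theory Defs
  imports "HOL-Algebra.Algebra"
begin

text \<open>Abelian groups are modelled as HOL-Algebra commutative groups (written
multiplicatively). For subgroups X \<subseteq> Y, finiteness of Y/X is finiteness of the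
set of cosets S y, y in Y.\<close>

definition inertial :: "('a, 'b) monoid_scheme \<Rightarrow> ('a \<Rightarrow> 'a) \<Rightarrow> bool" where
  "inertial H f \<longleftrightarrow>
     (\<forall>S. subgroup S H \<longrightarrow>
        finite ((\<lambda>y. r_coset H S y) ` (set_mult H (f ` S) S)))"

definition left_inertial :: "('a, 'b) monoid_scheme \<Rightarrow> ('a \<Rightarrow> 'a) \<Rightarrow> bool" where
  "left_inertial H f \<longleftrightarrow>
     (\<forall>S. subgroup S H \<longrightarrow>
        finite ((\<lambda>y. r_coset H (S \<inter> f ` S) y) ` S))"

text \<open>Endomorphism of G Mod F induced by f (for f(F) \<subseteq> F): the coset F a is
sent to F f(a), computed choice-free as F \<cdot> f(C).\<close>

definition induced_quot :: "('a, 'b) monoid_scheme \<Rightarrow> 'a set \<Rightarrow> ('a \<Rightarrow> 'a) \<Rightarrow> 'a set \<Rightarrow> 'a set" where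
  "induced_quot G F f C = set_mult G F (f ` C)"

end

theory Submission
  imports Defs
begin


lemma (in group) cov1:
  assumes "subgroup K G" "M \<subseteq> carrier G" "finite ((\<lambda>y. K #> y) ` M)"
  shows "\<exists>T. finite T \<and> T \<subseteq> M \<and> (\<forall>y\<in>M. \<exists>x\<in>K. \<exists>t\<in>T. y = x \<otimes> t)"
proof -
  obtain T where T: "T \<subseteq> M" "finite T" "(\<lambda>y. K #> y) ` M = (\<lambda>y. K #> y) ` T"
    using finite_subset_image[OF assms(3) subset_refl] by metis
  have "\<exists>x\<in>K. \<exists>t\<in>T. y = x \<otimes> t" if y: "y \<in> M" for y
  proof -
    obtain t where t: "t \<in> T" "K #> y = K #> t" using T(3) y by blast
    have "y \<in> K #> t" using rcos_self[of y K] assms y t by auto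
    then show ?thesis using t unfolding r_coset_def by auto
  qed
  then show ?thesis using T by blast
qed

lemma (in group) cov2:
  assumes "subgroup K G" "T \<subseteq> carrier G" "finite T" "\<forall>y\<in>M. \<exists>x\<in>K. \<exists>t\<in>T. y = x \<otimes> t"
  shows "finite ((\<lambda>y. K #> y) ` M)"
proof -
  have "(\<lambda>y. K #> y) ` M \<subseteq> (\<lambda>y. K #> y) ` T"
  proof
    fix c assume "c \<in> (\<lambda>y. K #> y) ` M"
    then obtain y where y: "y \<in> M" "c = K #> y" by auto
    then obtain x t where xt: "x \<in> K" "t \<in> T" "y = x \<otimes> t" using assms(4) by blast
    have xc: "x \<in> carrier G" using xt(1) assms(1) subgroup.mem_carrier by metis
    have tc: "t \<in> carrier G" using xt(2) assms(2) by (rule subsetD[rotated])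
    have "K #> y = K #> x #> t" using coset_mult_assoc[OF subgroup.subset[OF assms(1)] xc tc] xt(3) by simp
    also have "\<dots> = K #> t" using coset_join2[OF xc assms(1) xt(1)] by simp
    finally have "c = K #> t" using y(2) by simp
    then show "c \<in> (\<lambda>y. K #> y) ` T" using xt(2) by (rule image_eqI)
  qed
  moreover have "finite ((\<lambda>y. K #> y) ` T)" using assms(3) by simp
  ultimately show ?thesis by (rule finite_subset)
qed


lemma rcoset_upd: "r_coset (G\<lparr>carrier := A\<rparr>) = r_coset G"
  by (intro ext) (simp add: r_coset_def)
lemma setmult_upd: "set_mult (G\<lparr>carrier := A\<rparr>) = set_mult G"
  by (intro ext) (simp add: set_mult_def)

lemma (in comm_group) fin_index_reps:
  assumes A0: "subgroup A0 G" "finite (rcosets A0)" and K: "subgroup K G"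
  shows "\<exists>T0. finite T0 \<and> T0 \<subseteq> K \<and> (\<forall>k\<in>K. \<exists>x\<in>K \<inter> A0. \<exists>t\<in>T0. k = x \<otimes> t)"
proof -
  have Kc: "K \<subseteq> carrier G" using K subgroup.subset by blast
  have "(\<lambda>y. A0 #> y) ` K \<subseteq> rcosets A0" using Kc unfolding RCOSETS_def by blast
  then have "finite ((\<lambda>y. A0 #> y) ` K)" using A0(2) finite_subset by blast
  then obtain T0 where T0: "finite T0" "T0 \<subseteq> K" "\<forall>y\<in>K. \<exists>x\<in>A0. \<exists>t\<in>T0. y = x \<otimes> t"
    using cov1[OF A0(1) Kc] by blast
  have "\<exists>x\<in>K \<inter> A0. \<exists>t\<in>T0. k = x \<otimes> t" if k: "k \<in> K" for k
  proof -
    obtain x t where xt: "x \<in> A0" "t \<in> T0" "k = x \<otimes> t" using T0(3) k by blast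
    have tK: "t \<in> K" using xt(2) T0(2) by blast
    have tc: "t \<in> carrier G" using tK Kc by blast
    have xc: "x \<in> carrier G" using xt(1) A0(1) subgroup.mem_carrier by metis
    have "x = k \<otimes> inv t" using xt(3) xc tc by (simp add: m_assoc)
    moreover have "k \<otimes> inv t \<in> K" using k tK K by (simp add: subgroup.m_closed subgroup.m_inv_closed)
    ultimately show ?thesis using xt by blast
  qed
  then show ?thesis using T0 by blast
qed

lemma (in comm_group) partA_inert:
  assumes hom: "\<phi> \<in> hom G G" and A0: "subgroup A0 G" "\<phi> ` A0 \<subseteq> A0" "finite (rcosets A0)"
    and inert: "inertial (G\<lparr>carrier := A0\<rparr>) \<phi>"
  shows "inertial G \<phi>"
  unfolding inertial_def
proof (intro allI impI)
  fix K assume K: "subgroup K G"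
  have Kc: "K \<subseteq> carrier G" using K subgroup.subset by blast
  have A0c: "A0 \<subseteq> carrier G" using A0 subgroup.subset by blast
  obtain T0 where T0: "finite T0" "T0 \<subseteq> K" "\<forall>k\<in>K. \<exists>x\<in>K \<inter> A0. \<exists>t\<in>T0. k = x \<otimes> t"
    using fin_index_reps[OF A0(1) A0(3) K] by blast
  define K0 where "K0 = K \<inter> A0"
  have K0: "subgroup K0 G" unfolding K0_def using subgroups_Inter_pair K A0(1) by blast
  have K0c: "K0 \<subseteq> carrier G" using K0 subgroup.subset by blast
  have "subgroup K0 (G\<lparr>carrier := A0\<rparr>)" using subgroup_incl[OF K0 A0(1)] K0_def by blast
  then have "finite ((\<lambda>y. K0 #> y) ` (\<phi> ` K0 <#> K0))"
    using inert unfolding inertial_def rcoset_upd setmult_upd by blast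
  moreover have Mc: "\<phi> ` K0 <#> K0 \<subseteq> carrier G"
    using K0c hom unfolding set_mult_def hom_def Pi_def by auto
  ultimately obtain T1 where T1: "finite T1" "T1 \<subseteq> \<phi> ` K0 <#> K0"
     "\<forall>y\<in>\<phi> ` K0 <#> K0. \<exists>x\<in>K0. \<exists>t\<in>T1. y = x \<otimes> t"
    using cov1[OF K0 Mc] by blast
  define T' where "T' = (\<lambda>(t1,t0,t0'). t1 \<otimes> \<phi> t0 \<otimes> t0') ` (T1 \<times> T0 \<times> T0)"
  have T1c: "T1 \<subseteq> carrier G" using T1(2) Mc by blast
  have T0c: "T0 \<subseteq> carrier G" using T0(2) Kc by blast
  have "finite T'" unfolding T'_def using T0 T1 by simp
  moreover have "T' \<subseteq> carrier G" unfolding T'_def using T1c T0c hom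
    by (auto simp: hom_def Pi_def intro!: m_closed)
  moreover have "\<forall>y\<in>\<phi> ` K <#> K. \<exists>x\<in>K. \<exists>t\<in>T'. y = x \<otimes> t"
  proof
    fix y assume "y \<in> \<phi> ` K <#> K"
    then obtain k k' where kk: "k \<in> K" "k' \<in> K" "y = \<phi> k \<otimes> k'" unfolding set_mult_def by blast
    obtain a t0 where a: "a \<in> K0" "t0 \<in> T0" "k = a \<otimes> t0" using T0(3) kk(1) K0_def by blast
    obtain b t0' where b: "b \<in> K0" "t0' \<in> T0" "k' = b \<otimes> t0'" using T0(3) kk(2) K0_def by blast
    have "\<phi> a \<otimes> b \<in> \<phi> ` K0 <#> K0" using a b unfolding set_mult_def by blast
    then obtain x t1 where x: "x \<in> K0" "t1 \<in> T1" "\<phi> a \<otimes> b = x \<otimes> t1" using T1(3) by blast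
    have ac: "a \<in> carrier G" "b \<in> carrier G" "x \<in> carrier G" using a b x K0c by auto
    have tc: "t0 \<in> carrier G" "t0' \<in> carrier G" "t1 \<in> carrier G" using a b x T0c T1c by auto
    have pc: "\<phi> a \<in> carrier G" "\<phi> t0 \<in> carrier G" using ac tc hom by (auto simp: hom_def Pi_def)
    have "y = \<phi> a \<otimes> \<phi> t0 \<otimes> (b \<otimes> t0')" using kk a b hom_mult[OF hom] ac tc by simp
    also have "\<dots> = (\<phi> a \<otimes> b) \<otimes> (\<phi> t0 \<otimes> t0')" using ac tc pc by (simp add: m_ac)
    also have "\<dots> = x \<otimes> (t1 \<otimes> \<phi> t0 \<otimes> t0')" using x ac tc pc by (simp add: m_ac)
    finally have "y = x \<otimes> (t1 \<otimes> \<phi> t0 \<otimes> t0')" .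
    moreover have "t1 \<otimes> \<phi> t0 \<otimes> t0' \<in> T'" unfolding T'_def using x a b by force
    ultimately show "\<exists>x\<in>K. \<exists>t\<in>T'. y = x \<otimes> t" using x K0_def by blast
  qed
  ultimately show "finite ((\<lambda>y. K #> y) ` (\<phi> ` K <#> K))" using cov2[OF K] by blast
qed


lemma (in comm_group) partA_left:
  assumes hom: "\<phi> \<in> hom G G" and A0: "subgroup A0 G" "\<phi> ` A0 \<subseteq> A0" "finite (rcosets A0)"
    and inert: "left_inertial (G\<lparr>carrier := A0\<rparr>) \<phi>"
  shows "left_inertial G \<phi>"
  unfolding left_inertial_def
proof (intro allI impI)
  fix K assume K: "subgroup K G"
  have gh: "group_hom G G \<phi>" using hom by (simp add: group_hom_def group_hom_axioms_def is_group)
  have Kc: "K \<subseteq> carrier G" using K subgroup.subset by blast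
  obtain T0 where T0: "finite T0" "T0 \<subseteq> K" "\<forall>k\<in>K. \<exists>x\<in>K \<inter> A0. \<exists>t\<in>T0. k = x \<otimes> t"
    using fin_index_reps[OF A0(1) A0(3) K] by blast
  define K0 where "K0 = K \<inter> A0"
  have K0: "subgroup K0 G" unfolding K0_def using subgroups_Inter_pair K A0(1) by blast
  have K0c: "K0 \<subseteq> carrier G" using K0 subgroup.subset by blast
  have KK: "subgroup (K0 \<inter> \<phi> ` K0) G"
    using subgroups_Inter_pair[OF K0 group_hom.subgroup_img_is_subgroup[OF gh K0]] .
  have "subgroup K0 (G\<lparr>carrier := A0\<rparr>)" using subgroup_incl[OF K0 A0(1)] K0_def by blast
  then have "finite ((\<lambda>y. (K0 \<inter> \<phi> ` K0) #> y) ` K0)"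
    using inert unfolding left_inertial_def rcoset_upd by blast
  then obtain T1 where T1: "finite T1" "T1 \<subseteq> K0"
     "\<forall>y\<in>K0. \<exists>x\<in>K0 \<inter> \<phi> ` K0. \<exists>t\<in>T1. y = x \<otimes> t"
    using cov1[OF KK K0c] by blast
  define T' where "T' = (\<lambda>(t1,t0). t1 \<otimes> t0) ` (T1 \<times> T0)"
  have T1c: "T1 \<subseteq> carrier G" using T1(2) K0c by blast
  have T0c: "T0 \<subseteq> carrier G" using T0(2) Kc by blast
  have KK': "subgroup (K \<inter> \<phi> ` K) G"
    using subgroups_Inter_pair[OF K group_hom.subgroup_img_is_subgroup[OF gh K]] .
  have "finite T'" unfolding T'_def using T0 T1 by simp
  moreover have "T' \<subseteq> carrier G" unfolding T'_def using T1c T0c by auto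
  moreover have "\<forall>y\<in>K. \<exists>x\<in>K \<inter> \<phi> ` K. \<exists>t\<in>T'. y = x \<otimes> t"
  proof
    fix k assume k: "k \<in> K"
    obtain a t0 where a: "a \<in> K0" "t0 \<in> T0" "k = a \<otimes> t0" using T0(3) k K0_def by blast
    obtain x t1 where x: "x \<in> K0 \<inter> \<phi> ` K0" "t1 \<in> T1" "a = x \<otimes> t1" using T1(3) a(1) by blast
    have c: "x \<in> carrier G" "t0 \<in> carrier G" "t1 \<in> carrier G" using x a K0c T0c T1c by auto
    have "k = x \<otimes> (t1 \<otimes> t0)" using a x c by (simp add: m_assoc)
    moreover have "t1 \<otimes> t0 \<in> T'" unfolding T'_def using x a by force
    moreover have "x \<in> K \<inter> \<phi> ` K" using x K0_def by blast
    ultimately show "\<exists>x\<in>K \<inter> \<phi> ` K. \<exists>t\<in>T'. k = x \<otimes> t" by blast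
  qed
  ultimately show "finite ((\<lambda>y. (K \<inter> \<phi> ` K) #> y) ` K)" using cov2[OF KK'] by blast
qed


lemma (in comm_group) ind_eq:
  assumes hom: "\<phi> \<in> hom G G" and F: "subgroup F G" "\<phi> ` F \<subseteq> F" and x: "x \<in> carrier G"
  shows "induced_quot G F \<phi> (F #> x) = F #> \<phi> x"
proof -
  have Fc: "F \<subseteq> carrier G" using F subgroup.subset by blast
  have phc: "\<And>z. z \<in> carrier G \<Longrightarrow> \<phi> z \<in> carrier G" using hom by (auto simp: hom_def Pi_def)
  show ?thesis unfolding induced_quot_def
  proof
    show "F <#> \<phi> ` (F #> x) \<subseteq> F #> \<phi> x"
    proof
      fix z assume "z \<in> F <#> \<phi> ` (F #> x)"
      then obtain f f' where ff: "f \<in> F" "f' \<in> F" "z = f \<otimes> \<phi> (f' \<otimes> x)"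
        unfolding set_mult_def r_coset_def by blast
      have c: "f \<in> carrier G" "f' \<in> carrier G" using ff Fc by auto
      have "z = (f \<otimes> \<phi> f') \<otimes> \<phi> x" using ff c x hom_mult[OF hom] phc by (simp add: m_assoc)
      moreover have "f \<otimes> \<phi> f' \<in> F" using ff F by (auto intro: subgroup.m_closed)
      ultimately show "z \<in> F #> \<phi> x" unfolding r_coset_def by blast
    qed
  next
    show "F #> \<phi> x \<subseteq> F <#> \<phi> ` (F #> x)"
    proof
      fix z assume "z \<in> F #> \<phi> x"
      then obtain f where f: "f \<in> F" "z = f \<otimes> \<phi> x" unfolding r_coset_def by blast
      have "x \<in> F #> x" using rcos_self[OF x F(1)] .
      then show "z \<in> F <#> \<phi> ` (F #> x)" using f unfolding set_mult_def by blast
    qed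
  qed
qed

lemma (in comm_group) quot_setup:
  assumes F: "subgroup F G" and K: "subgroup K G"
  shows "group (G Mod F)" "group_hom G (G Mod F) (\<lambda>a. F #> a)"
    "subgroup ((\<lambda>a. F #> a) ` K) (G Mod F)"
proof -
  have N: "F \<lhd> G" using subgroup_imp_normal[OF F] .
  show g: "group (G Mod F)" using normal.factorgroup_is_group[OF N] .
  show gh: "group_hom G (G Mod F) (\<lambda>a. F #> a)"
    using normal.r_coset_hom_Mod[OF N] g by (simp add: group_hom_def group_hom_axioms_def is_group)
  show "subgroup ((\<lambda>a. F #> a) ` K) (G Mod F)" using group_hom.subgroup_img_is_subgroup[OF gh K] .
qed

lemma (in comm_group) partF_inert:
  assumes hom: "\<phi> \<in> hom G G" and F: "subgroup F G" "finite F" "\<phi> ` F \<subseteq> F"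
    and inert: "inertial (G Mod F) (induced_quot G F \<phi>)"
  shows "inertial G \<phi>"
  unfolding inertial_def
proof (intro allI impI)
  fix K assume K: "subgroup K G"
  have N: "F \<lhd> G" using subgroup_imp_normal[OF F(1)] .
  have Kc: "K \<subseteq> carrier G" using K subgroup.subset by blast
  have Fc: "F \<subseteq> carrier G" using F subgroup.subset by blast
  have phc: "\<And>z. z \<in> carrier G \<Longrightarrow> \<phi> z \<in> carrier G" using hom by (auto simp: hom_def Pi_def)
  note qs = quot_setup[OF F(1) K]
  define S where "S = (\<lambda>a. F #> a) ` K"
  define ind where "ind = induced_quot G F \<phi>"
  have indS: "ind ` S = (\<lambda>a. F #> \<phi> a) ` K"
    unfolding S_def ind_def image_image using ind_eq[OF hom F(1) F(3)] Kc by (auto intro!: image_cong)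
  have carQ: "carrier (G Mod F) = (\<lambda>x. F #> x) ` carrier G" by (rule carrier_FactGroup)
  have "finite ((\<lambda>Y. r_coset (G Mod F) S Y) ` set_mult (G Mod F) (ind ` S) S)"
    using inert qs(3) unfolding inertial_def S_def ind_def by blast
  moreover have Mc: "set_mult (G Mod F) (ind ` S) S \<subseteq> carrier (G Mod F)"
  proof -
    have indSc: "ind ` S \<subseteq> carrier (G Mod F)" unfolding indS carQ using Kc phc by auto
    have Sc: "S \<subseteq> carrier (G Mod F)" using subgroup.subset[OF qs(3)] S_def by simp
    show ?thesis unfolding set_mult_def
      using indSc Sc monoid.m_closed[OF group.is_monoid[OF qs(1)]] by blast
  qed
  ultimately obtain TT where TT: "finite TT" "TT \<subseteq> set_mult (G Mod F) (ind ` S) S"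
    "\<forall>Y\<in>set_mult (G Mod F) (ind ` S) S. \<exists>C\<in>S. \<exists>\<tau>\<in>TT. Y = C <#> \<tau>"
    using group.cov1[OF qs(1) qs(3)[folded S_def] Mc] by auto
  have "TT \<subseteq> (\<lambda>x. F #> x) ` carrier G" using TT(2) Mc carQ by blast
  then obtain T where T: "T \<subseteq> carrier G" "finite T" "TT = (\<lambda>x. F #> x) ` T"
    using finite_subset_image[OF TT(1)] by metis
  define T' where "T' = (\<lambda>(f,t). f \<otimes> t) ` (F \<times> T)"
  have "finite T'" unfolding T'_def using T F(2) by simp
  moreover have "T' \<subseteq> carrier G" unfolding T'_def using T Fc by auto
  moreover have "\<forall>y\<in>\<phi> ` K <#> K. \<exists>x\<in>K. \<exists>t\<in>T'. y = x \<otimes> t"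
  proof
    fix y assume "y \<in> \<phi> ` K <#> K"
    then obtain a b where ab: "a \<in> K" "b \<in> K" "y = \<phi> a \<otimes> b" unfolding set_mult_def by blast
    have abc: "a \<in> carrier G" "b \<in> carrier G" "\<phi> a \<in> carrier G" using ab Kc phc by auto
    have yc: "y \<in> carrier G" using ab abc by simp
    have e1: "F #> y = (F #> \<phi> a) <#> (F #> b)" using normal.rcos_sum[OF N abc(3) abc(2)] ab by simp
    have "F #> \<phi> a \<in> ind ` S" unfolding indS using ab by blast
    moreover have "F #> b \<in> S" unfolding S_def using ab by blast
    ultimately have "(F #> \<phi> a) \<otimes>\<^bsub>G Mod F\<^esub> (F #> b) \<in> set_mult (G Mod F) (ind ` S) S"
      unfolding set_mult_def by blast
    then have "F #> y \<in> set_mult (G Mod F) (ind ` S) S" unfolding e1 by simp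
    then obtain C \<tau> where C: "C \<in> S" "\<tau> \<in> TT" "F #> y = C <#> \<tau>" using TT(3) by blast
    obtain x where x: "x \<in> K" "C = F #> x" using C(1) S_def by blast
    obtain t where t: "t \<in> T" "\<tau> = F #> t" using C(2) T(3) by blast
    have xtc: "x \<in> carrier G" "t \<in> carrier G" using x t Kc T(1) by auto
    have "F #> y = F #> (x \<otimes> t)" using C(3) x t normal.rcos_sum[OF N xtc] by simp
    then have "y \<in> F #> (x \<otimes> t)" using rcos_self[OF yc F(1)] by simp
    then obtain f where f: "f \<in> F" "y = f \<otimes> (x \<otimes> t)" unfolding r_coset_def by blast
    have fc: "f \<in> carrier G" using f Fc by auto
    have "y = x \<otimes> (f \<otimes> t)" using f fc xtc by (simp add: m_ac)
    moreover have "f \<otimes> t \<in> T'" unfolding T'_def using f t by force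
    ultimately show "\<exists>x\<in>K. \<exists>t\<in>T'. y = x \<otimes> t" using x by blast
  qed
  ultimately show "finite ((\<lambda>y. K #> y) ` (\<phi> ` K <#> K))" using cov2[OF K] by blast
qed


lemma (in comm_group) partF_left:
  assumes hom: "\<phi> \<in> hom G G" and F: "subgroup F G" "finite F" "\<phi> ` F \<subseteq> F"
    and inert: "left_inertial (G Mod F) (induced_quot G F \<phi>)"
  shows "left_inertial G \<phi>"
  unfolding left_inertial_def
proof (intro allI impI)
  fix K assume K: "subgroup K G"
  have N: "F \<lhd> G" using subgroup_imp_normal[OF F(1)] .
  have gh: "group_hom G G \<phi>" using hom by (simp add: group_hom_def group_hom_axioms_def is_group)
  have Kc: "K \<subseteq> carrier G" using K subgroup.subset by blast
  have Fc: "F \<subseteq> carrier G" using F subgroup.subset by blast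
  have phc: "\<And>z. z \<in> carrier G \<Longrightarrow> \<phi> z \<in> carrier G" using hom by (auto simp: hom_def Pi_def)
  have pK: "subgroup (\<phi> ` K) G" using group_hom.subgroup_img_is_subgroup[OF gh K] .
  note qs = quot_setup[OF F(1) K]
  note qs2 = quot_setup[OF F(1) pK]
  define S where "S = (\<lambda>a. F #> a) ` K"
  define ind where "ind = induced_quot G F \<phi>"
  have indS: "ind ` S = (\<lambda>a. F #> \<phi> a) ` K"
    unfolding S_def ind_def image_image using ind_eq[OF hom F(1) F(3)] Kc by (auto intro!: image_cong)
  have indS2: "ind ` S = (\<lambda>a. F #> a) ` (\<phi> ` K)" unfolding indS image_image ..
  have SS: "subgroup (S \<inter> ind ` S) (G Mod F)"
    using group.subgroups_Inter_pair[OF qs(1) qs(3)[folded S_def] qs2(3)[folded indS2]] .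
  have carQ: "carrier (G Mod F) = (\<lambda>x. F #> x) ` carrier G" by (rule carrier_FactGroup)
  have Sc: "S \<subseteq> carrier (G Mod F)" using subgroup.subset[OF qs(3)] S_def by simp
  have "finite ((\<lambda>Y. r_coset (G Mod F) (S \<inter> ind ` S) Y) ` S)"
    using inert qs(3) unfolding left_inertial_def S_def ind_def by blast
  then obtain TT where TT: "finite TT" "TT \<subseteq> S"
    "\<forall>Y\<in>S. \<exists>C\<in>S \<inter> ind ` S. \<exists>\<tau>\<in>TT. Y = C <#> \<tau>"
    using group.cov1[OF qs(1) SS Sc] by auto
  obtain T where T: "T \<subseteq> K" "finite T" "TT = (\<lambda>x. F #> x) ` T"
    using finite_subset_image[OF TT(1) TT(2)[unfolded S_def]] by metis
  define P where "P f = {a \<in> K. \<exists>b\<in>K. a = f \<otimes> \<phi> b}" for f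
  define R where "R = (\<lambda>f. SOME a. a \<in> P f) ` {f \<in> F. P f \<noteq> {}}"
  have Rfin: "finite R" unfolding R_def using F(2) by simp
  have RK: "R \<subseteq> K"
  proof
    fix r assume "r \<in> R"
    then obtain f where f: "P f \<noteq> {}" "r = (SOME a. a \<in> P f)" unfolding R_def by blast
    then obtain a0 where "a0 \<in> P f" by blast
    then have "r \<in> P f" unfolding f(2) by (rule someI)
    then show "r \<in> K" unfolding P_def by blast
  qed
  have key: "\<exists>z\<in>K \<inter> \<phi> ` K. \<exists>r\<in>R. a = z \<otimes> r" if f: "f \<in> F" and a: "a \<in> P f" for f a
  proof -
    define r where "r = (SOME a. a \<in> P f)"
    have rP: "r \<in> P f" unfolding r_def using a by (rule someI)
    have rR: "r \<in> R" unfolding R_def r_def using f a by blast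
    obtain b where b: "a \<in> K" "b \<in> K" "a = f \<otimes> \<phi> b" using a P_def by blast
    obtain b' where b': "r \<in> K" "b' \<in> K" "r = f \<otimes> \<phi> b'" using rP P_def by blast
    have c: "f \<in> carrier G" "b \<in> carrier G" "b' \<in> carrier G" "\<phi> b \<in> carrier G" "\<phi> b' \<in> carrier G"
      "inv (\<phi> b') \<in> carrier G" "r \<in> carrier G" "a \<in> carrier G"
      using f b b' Fc Kc phc by auto
    define z where "z = \<phi> (b \<otimes> inv b')"
    have zK: "z \<in> \<phi> ` K" unfolding z_def using b b' K by (auto intro: subgroup.m_closed subgroup.m_inv_closed)
    have zc: "z \<in> carrier G" unfolding z_def using c by (simp add: phc)
    have "z \<otimes> r = (\<phi> b \<otimes> inv (\<phi> b')) \<otimes> (f \<otimes> \<phi> b')"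
      unfolding z_def b'(3) using c hom_mult[OF hom] group_hom.hom_inv[OF gh] by simp
    also have "\<dots> = (f \<otimes> \<phi> b) \<otimes> (inv (\<phi> b') \<otimes> \<phi> b')" using c by (simp add: m_ac)
    also have "\<dots> = a" using c b(3) by simp
    finally have zr: "z \<otimes> r = a" .
    have "z = z \<otimes> r \<otimes> inv r" using zc c by (simp add: m_assoc)
    then have "z = a \<otimes> inv r" using zr by simp
    then have "z \<in> K" using b b' K by (simp add: subgroup.m_closed subgroup.m_inv_closed)
    then show ?thesis using zK rR zr by blast
  qed
  define T' where "T' = (\<lambda>(r,f,t). r \<otimes> f \<otimes> t) ` (R \<times> F \<times> T)"
  have KK': "subgroup (K \<inter> \<phi> ` K) G"
    using subgroups_Inter_pair[OF K pK] .
  have "finite T'" unfolding T'_def using T F(2) Rfin by simp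
  moreover have "T' \<subseteq> carrier G" unfolding T'_def using T Fc RK Kc by (auto intro!: m_closed)
  moreover have "\<forall>y\<in>K. \<exists>z\<in>K \<inter> \<phi> ` K. \<exists>t\<in>T'. y = z \<otimes> t"
  proof
    fix x assume x: "x \<in> K"
    have xc: "x \<in> carrier G" using x Kc by auto
    have "F #> x \<in> S" unfolding S_def using x by blast
    then obtain C \<tau> where C: "C \<in> S \<inter> ind ` S" "\<tau> \<in> TT" "F #> x = C <#> \<tau>" using TT(3) by blast
    obtain a where a: "a \<in> K" "C = F #> a" using C(1) S_def by blast
    obtain b where b: "b \<in> K" "C = F #> \<phi> b" using C(1) indS by blast
    obtain t where t: "t \<in> T" "\<tau> = F #> t" using C(2) T(3) by blast
    have atc: "a \<in> carrier G" "t \<in> carrier G" using a t Kc T(1) by auto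
    have "F #> x = F #> (a \<otimes> t)" using C(3) a t normal.rcos_sum[OF N atc] by simp
    then have "x \<in> F #> (a \<otimes> t)" using rcos_self[OF xc F(1)] by simp
    then obtain f where f: "f \<in> F" "x = f \<otimes> (a \<otimes> t)" unfolding r_coset_def by blast
    have "a \<in> F #> \<phi> b" using rcos_self[OF atc(1) F(1)] a b by simp
    then obtain f' where f': "f' \<in> F" "a = f' \<otimes> \<phi> b" unfolding r_coset_def by blast
    have "a \<in> P f'" unfolding P_def using a b f' by blast
    then obtain z r where zr: "z \<in> K \<inter> \<phi> ` K" "r \<in> R" "a = z \<otimes> r" using key f' by blast
    have c: "z \<in> carrier G" "r \<in> carrier G" "f \<in> carrier G" using zr f Kc RK Fc by auto
    have "x = z \<otimes> (r \<otimes> f \<otimes> t)" using f(2) zr(3) c atc by (simp add: m_ac)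
    moreover have "r \<otimes> f \<otimes> t \<in> T'" unfolding T'_def using zr f t by force
    ultimately show "\<exists>z\<in>K \<inter> \<phi> ` K. \<exists>t\<in>T'. x = z \<otimes> t" using zr by blast
  qed
  ultimately show "finite ((\<lambda>y. (K \<inter> \<phi> ` K) #> y) ` K)" using cov2[OF KK'] by blast
qed


theorem proposition2p3:
  fixes G :: "('a, 'b) monoid_scheme" and \<phi> :: "'a \<Rightarrow> 'a"
  assumes "comm_group G" and "\<phi> \<in> hom G G"
  shows
    "(((\<exists>A0. subgroup A0 G \<and> \<phi> ` A0 \<subseteq> A0 \<and> finite (rcosets\<^bsub>G\<^esub> A0)
              \<and> inertial (G\<lparr>carrier := A0\<rparr>) \<phi>)
      \<or> (\<exists>F. subgroup F G \<and> finite F \<and> \<phi> ` F \<subseteq> F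
              \<and> inertial (G Mod F) (induced_quot G F \<phi>)))
     \<longrightarrow> inertial G \<phi>)
    \<and>
    (((\<exists>A0. subgroup A0 G \<and> \<phi> ` A0 \<subseteq> A0 \<and> finite (rcosets\<^bsub>G\<^esub> A0)
              \<and> left_inertial (G\<lparr>carrier := A0\<rparr>) \<phi>)
      \<or> (\<exists>F. subgroup F G \<and> finite F \<and> \<phi> ` F \<subseteq> F
              \<and> left_inertial (G Mod F) (induced_quot G F \<phi>)))
     \<longrightarrow> left_inertial G \<phi>)"
  proof -
  interpret comm_group G by (rule assms(1))
  show ?thesis
    using partA_inert[OF assms(2)] partF_inert[OF assms(2)]
          partA_left[OF assms(2)] partF_left[OF assms(2)] by blast
qed

end
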